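(* Let $0<\alpha\le \pi/4$ and let $\mathcal N_\alpha(\rho)=E_\alpha\rho E_\alpha^\dagger+D_\alpha\rho D_\alpha^\dagger$ on $\mathcal L(\mathbb C^3)$ with $E_\alpha=\sin\alpha\,|0\rangle\langle 1|+|1\rangle\langle 2|$ and $D_\alpha=\cos\alpha\,|2\rangle\langle 1|+|1\rangle\langle 0|$. Let $S=\mathrm{span}\{E^\dagger F: E,F\in\{E_\alpha,D_\alpha\}\}$ be its non-commutative graph. Then $$\tilde\vartheta(\mathcal N_\alpha):=\tilde\vartheta(S)=2+\cos^2\alpha+\cos^{-2}\alpha>4.$$
   Context: For a subspace $S\subseteq\mathcal L(A')$ (with $A\cong A'$, $|\Phi\rangle=\sum_i|i\rangle_A|i\rangle_{A'}$), the quantum Lovász number is the SDP value $\tilde\vartheta(S)=\max\{\langle\Phi|(\mathbb 1\otimes\rho+T)|\Phi\rangle:\ T\in S^\perp\otimes\mathcal L(A'),\ \mathrm{tr}\rho=1,\ \rho\ge0,\ \mathbb 1\otimes\rho+T\ge0\}$, where $S^\perp$ is the orthogonal complement of $S$ with respect to the Hilbert–Schmidt inner product. Equivalently (by strong duality) $\tilde\vartheta(S)=\min\{\|\mathrm{tr}_A Y\|_\infty:\ Y\in S\otimes\mathcal L(A'),\ Y\ge|\Phi\rangle\langle\Phi|\}$. *)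

theory Defs
  imports "HOL-Analysis.Analysis" "HOL-Library.Complex_Order"
begin

text \<open>Operators on a finite-dimensional Hilbert space with orthonormal basis indexed by 'n
  are represented as complex matrices of type complex^'n^'n (entry M$i$j = <i|M|j>).\<close>

definition cmat_scale :: "complex \<Rightarrow> complex^'n^'n \<Rightarrow> complex^'n^'n" where
  "cmat_scale c M = (\<chi> i j. c * M$i$j)"

definition adjoint :: "complex^'n^'n \<Rightarrow> complex^'n^'n" where
  "adjoint M = (\<chi> i j. cnj (M$j$i))"

definition ctrace :: "complex^'n^'n \<Rightarrow> complex" where
  "ctrace M = (\<Sum>i\<in>UNIV. M$i$i)"

definition hs_inner :: "complex^'n^'n \<Rightarrow> complex^'n^'n \<Rightarrow> complex" where
  "hs_inner X Y = ctrace (adjoint X ** Y)"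

definition hs_orth :: "(complex^'n^'n) set \<Rightarrow> (complex^'n^'n) set" where
  "hs_orth S = {X. \<forall>Y\<in>S. hs_inner Y X = 0}"

text \<open>Positive semidefinite: <x|M|x> \<ge> 0 (real and nonnegative) for all x.\<close>
definition psd :: "complex^'n^'n \<Rightarrow> bool" where
  "psd M \<longleftrightarrow> (\<forall>x::complex^'n. 0 \<le> (\<Sum>i\<in>UNIV. \<Sum>j\<in>UNIV. cnj (x$i) * M$i$j * x$j))"

definition tensor :: "complex^'n^'n \<Rightarrow> complex^'m^'m \<Rightarrow> complex^('n \<times> 'm)^('n \<times> 'm)" where
  "tensor A B = (\<chi> p q. A$(fst p)$(fst q) * B$(snd p)$(snd q))"

text \<open>Algebraic tensor product U \<otimes> V of subspaces of operators: all finite sums of simple tensors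
  (scalars are absorbed since U, V are subspaces).\<close>
definition tensor_space :: "(complex^'n^'n) set \<Rightarrow> (complex^'m^'m) set \<Rightarrow> (complex^('n \<times> 'm)^('n \<times> 'm)) set" where
  "tensor_space U V = {(\<Sum>k<m. tensor (X k) (Y k)) | (m::nat) X Y. \<forall>k<m. X k \<in> U \<and> Y k \<in> V}"

text \<open>Maximally entangled (unnormalised) vector |Phi> = sum_i |i>_A |i>_A'.\<close>
definition Phi :: "complex^('n::finite \<times> 'n)" where
  "Phi = (\<chi> p. if fst p = snd p then 1 else 0)"

definition expect :: "complex^'n \<Rightarrow> complex^'n^'n \<Rightarrow> complex" where
  "expect v M = (\<Sum>i\<in>UNIV. \<Sum>j\<in>UNIV. cnj (v$i) * M$i$j * v$j)"

text \<open>Quantum Lovasz number of a subspace S of L(A'), A = A' (the SDP value, as supremum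
  of the feasible objective values).\<close>
definition qlovasz :: "(complex^'n^'n) set \<Rightarrow> real" where
  "qlovasz S = Sup {Re (expect Phi (tensor (mat 1) \<rho> + T)) | \<rho> T.
      T \<in> tensor_space (hs_orth S) UNIV \<and> ctrace \<rho> = 1 \<and> psd \<rho> \<and> psd (tensor (mat 1) \<rho> + T)}"

definition ncgraph :: "(complex^'n^'n) set \<Rightarrow> (complex^'n^'n) set" where
  "ncgraph Ks = {(\<Sum>p\<in>Ks \<times> Ks. cmat_scale (c p) (adjoint (fst p) ** snd p)) | c. True}"

definition ketbra :: "'n \<Rightarrow> 'n \<Rightarrow> complex^'n^'n" where
  "ketbra a b = (\<chi> i j. if i = a \<and> j = b then 1 else 0)"

definition E_op :: "real \<Rightarrow> complex^3^3" where
  "E_op \<alpha> = cmat_scale (complex_of_real (sin \<alpha>)) (ketbra 0 1) + ketbra 1 2"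

definition D_op :: "real \<Rightarrow> complex^3^3" where
  "D_op \<alpha> = cmat_scale (complex_of_real (cos \<alpha>)) (ketbra 2 1) + ketbra 1 0"

end

theory Submission imports Defs begin

lemma U3: "(UNIV::3 set) = {0,1,2}" using UNIV_3 by auto
lemma sum3: "sum f (UNIV::3 set) = f 0 + f 1 + f 2" unfolding U3 by (simp add: add.assoc)
lemma forall3: "(\<forall>i::3. P i) \<longleftrightarrow> P 0 \<and> P 1 \<and> P 2"
proof -
  have "(\<forall>i::3. P i) \<longleftrightarrow> (\<forall>i\<in>(UNIV::3 set). P i)" by simp
  then show ?thesis unfolding U3 by simp
qed
lemma sum33: "sum f (UNIV::(3\<times>3) set) = f (0,0) + f (0,1) + f (0,2) + f (1,0) + f (1,1) + f (1,2) + f (2,0) + f (2,1) + f (2,2)"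
proof -
  have "sum f (UNIV::(3\<times>3) set) = (\<Sum>a\<in>(UNIV::3 set). \<Sum>b\<in>(UNIV::3 set). f (a,b))"
    unfolding UNIV_Times_UNIV[symmetric] sum.cartesian_product by simp
  then show ?thesis by (simp add: sum3 algebra_simps)
qed
lemma forall33: "(\<forall>p::3\<times>3. P p) \<longleftrightarrow> P (0,0) \<and> P (0,1) \<and> P (0,2) \<and> P (1,0) \<and> P (1,1) \<and> P (1,2) \<and> P (2,0) \<and> P (2,1) \<and> P (2,2)"
  by (simp only: split_paired_All forall3) blast

lemma ketbra_nth[simp]: "ketbra a b $ i $ j = (if i = a \<and> j = b then 1 else 0)" by (simp add: ketbra_def)
lemma cmat_scale_nth[simp]: "cmat_scale c M $ i $ j = c * M $ i $ j" by (simp add: cmat_scale_def)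
lemma adjoint_nth[simp]: "adjoint M $ i $ j = cnj (M $ j $ i)" by (simp add: adjoint_def)
lemma tensor_nth[simp]: "tensor A B $ p $ q = A$(fst p)$(fst q) * B$(snd p)$(snd q)" by (simp add: tensor_def)
lemma mat_nth[simp]: "(mat k :: 'a::zero^'n^'n) $ i $ j = (if i = j then k else 0)" by (simp add: mat_def)

lemma hs_inner_expand: "hs_inner Y B = (\<Sum>i\<in>UNIV. \<Sum>j\<in>UNIV. cnj (Y$i$j) * B$i$j)"
proof -
  have "hs_inner Y B = (\<Sum>i\<in>UNIV. \<Sum>j\<in>UNIV. cnj (Y$j$i) * B$j$i)"
    unfolding hs_inner_def ctrace_def by (simp add: matrix_matrix_mult_def)
  also have "\<dots> = (\<Sum>j\<in>UNIV. \<Sum>i\<in>UNIV. cnj (Y$j$i) * B$j$i)" by (rule sum.swap)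
  finally show ?thesis .
qed

lemma EE: "adjoint (E_op a) ** E_op a = cmat_scale (complex_of_real ((sin a)\<^sup>2)) (ketbra 1 1) + ketbra 2 2"
  by (simp add: vec_eq_iff forall3 matrix_matrix_mult_def sum3 E_op_def power2_eq_square)
lemma DD: "adjoint (D_op a) ** D_op a = cmat_scale (complex_of_real ((cos a)\<^sup>2)) (ketbra 1 1) + ketbra 0 0"
  by (simp add: vec_eq_iff forall3 matrix_matrix_mult_def sum3 D_op_def power2_eq_square)
lemma ED: "adjoint (E_op a) ** D_op a = ketbra 2 0"
  by (simp add: vec_eq_iff forall3 matrix_matrix_mult_def sum3 D_op_def E_op_def)
lemma DE: "adjoint (D_op a) ** E_op a = ketbra 0 2"
  by (simp add: vec_eq_iff forall3 matrix_matrix_mult_def sum3 D_op_def E_op_def)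

lemma cmat_scale_1[simp]: "cmat_scale 1 M = M" by (simp add: vec_eq_iff)
lemma cmat_scale_0[simp]: "cmat_scale 0 M = 0" by (simp add: vec_eq_iff)

lemma E_ne_D: "sin a \<noteq> 0 \<Longrightarrow> E_op a \<noteq> D_op a"
proof
  assume "sin a \<noteq> 0" "E_op a = D_op a"
  then have "E_op a $ 0 $ 1 = D_op a $ 0 $ 1" by simp
  with \<open>sin a \<noteq> 0\<close> show False by (simp add: E_op_def D_op_def)
qed

lemma ncgraph_elem:
  assumes "E \<noteq> D" "Y \<in> ncgraph {E, D}"
  shows "\<exists>k1 k2 k3 k4. Y = cmat_scale k1 (adjoint E ** E) + cmat_scale k2 (adjoint E ** D)
     + cmat_scale k3 (adjoint D ** E) + cmat_scale k4 (adjoint D ** D)"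
proof -
  obtain c where Y: "Y = (\<Sum>p\<in>{E,D} \<times> {E,D}. cmat_scale (c p) (adjoint (fst p) ** snd p))"
    using assms(2) unfolding ncgraph_def by blast
  have P: "{E,D} \<times> {E,D} = {(E,E),(E,D),(D,E),(D,D)}" by auto
  show ?thesis unfolding Y P using assms(1) by (simp add: add.assoc) blast
qed

lemma ncgraph_single:
  assumes "E \<in> Ks" "F \<in> Ks" "finite Ks"
  shows "adjoint E ** F \<in> ncgraph Ks"
proof -
  have "(\<Sum>p\<in>Ks \<times> Ks. cmat_scale (if p = (E,F) then 1 else 0) (adjoint (fst p) ** snd p))
      = (\<Sum>p\<in>Ks \<times> Ks. if p = (E,F) then adjoint (fst p) ** snd p else 0)"
    by (rule sum.cong) auto
  also have "\<dots> = adjoint E ** F" using assms by (subst sum.delta) auto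
  finally have eq: "adjoint E ** F = (\<Sum>p\<in>Ks \<times> Ks. cmat_scale (if p = (E,F) then 1 else 0) (adjoint (fst p) ** snd p))" ..
  show ?thesis unfolding ncgraph_def mem_Collect_eq
    by (rule exI[where x="\<lambda>p. if p = (E,F) then 1 else 0"]) (simp add: eq)
qed

lemma orth_iff:
  assumes "sin a \<noteq> 0"
  shows "B \<in> hs_orth (ncgraph {E_op a, D_op a}) \<longleftrightarrow>
    B$0$2 = 0 \<and> B$2$0 = 0 \<and> B$0$0 + complex_of_real ((cos a)\<^sup>2) * B$1$1 = 0
    \<and> complex_of_real ((sin a)\<^sup>2) * B$1$1 + B$2$2 = 0"
proof
  assume B: "B \<in> hs_orth (ncgraph {E_op a, D_op a})"
  have "hs_inner (adjoint E ** F) B = 0" if "E \<in> {E_op a, D_op a}" "F \<in> {E_op a, D_op a}" for E F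
    using B ncgraph_single[OF that] unfolding hs_orth_def by auto
  from this[of "E_op a" "E_op a"] this[of "E_op a" "D_op a"] this[of "D_op a" "E_op a"] this[of "D_op a" "D_op a"]
  show "B$0$2 = 0 \<and> B$2$0 = 0 \<and> B$0$0 + complex_of_real ((cos a)\<^sup>2) * B$1$1 = 0
    \<and> complex_of_real ((sin a)\<^sup>2) * B$1$1 + B$2$2 = 0"
    unfolding EE DD ED DE hs_inner_expand by (simp add: sum3)
next
  assume B: "B$0$2 = 0 \<and> B$2$0 = 0 \<and> B$0$0 + complex_of_real ((cos a)\<^sup>2) * B$1$1 = 0
    \<and> complex_of_real ((sin a)\<^sup>2) * B$1$1 + B$2$2 = 0"
  show "B \<in> hs_orth (ncgraph {E_op a, D_op a})" unfolding hs_orth_def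
  proof safe
    fix Y assume "Y \<in> ncgraph {E_op a, D_op a}"
    then obtain k1 k2 k3 k4 where Y: "Y = cmat_scale k1 (adjoint (E_op a) ** E_op a) + cmat_scale k2 (adjoint (E_op a) ** D_op a)
     + cmat_scale k3 (adjoint (D_op a) ** E_op a) + cmat_scale k4 (adjoint (D_op a) ** D_op a)"
      using ncgraph_elem E_ne_D[OF assms] by blast
    have "hs_inner Y B = cnj k1 * (complex_of_real ((sin a)\<^sup>2) * B$1$1 + B$2$2) + cnj k2 * B$2$0 + cnj k3 * B$0$2
       + cnj k4 * (B$0$0 + complex_of_real ((cos a)\<^sup>2) * B$1$1)"
      unfolding Y EE DD ED DE hs_inner_expand by (simp add: sum3 algebra_simps)
    then show "hs_inner Y B = 0" using B by simp
  qed
qed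

lemma expect_Phi: "expect (Phi::complex^(3\<times>3)) X =
   X$(0,0)$(0,0) + X$(1,1)$(1,1) + X$(2,2)$(2,2) + X$(0,0)$(1,1) + X$(1,1)$(0,0)
   + X$(0,0)$(2,2) + X$(2,2)$(0,0) + X$(1,1)$(2,2) + X$(2,2)$(1,1)"
  unfolding expect_def Phi_def by (simp add: sum33 algebra_simps)

definition unitv :: "'n \<Rightarrow> complex^'n" where "unitv p = (\<chi> q. if q = p then 1 else 0)"

lemma expect_unit: "expect (unitv p) X = X$p$p"
proof -
  have m1: "(x::complex) * (if b then 1 else 0) = (if b then x else 0)" for x b by simp
  have m2: "cnj (if b then 1 else 0) * (x::complex) = (if b then x else 0)" for x b by simp
  show ?thesis unfolding expect_def unitv_def by (simp add: m1 m2 sum.delta)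
qed

definition qv :: "real \<Rightarrow> complex^(3\<times>3)" where
  "qv k = (\<chi> p. if p = (0,0) \<or> p = (2,2) then 1 else if p = (1,1) then - complex_of_real k else 0)"

lemma expect_qv: "expect (qv k) X = X$(0,0)$(0,0) + complex_of_real (k * k) * X$(1,1)$(1,1) + X$(2,2)$(2,2)
   - complex_of_real k * (X$(0,0)$(1,1) + X$(1,1)$(0,0)) + X$(0,0)$(2,2) + X$(2,2)$(0,0)
   - complex_of_real k * (X$(1,1)$(2,2) + X$(2,2)$(1,1))"
  unfolding expect_def qv_def by (simp add: sum33 algebra_simps)

definition tY :: "complex \<Rightarrow> complex \<Rightarrow> complex \<Rightarrow> complex \<Rightarrow> complex^(3\<times>3)^(3\<times>3) \<Rightarrow> complex" where
  "tY v cv u su X = v * X$(0,0)$(0,0) + cv * X$(1,1)$(1,1) + u * X$(2,2)$(2,2) + v * (X$(0,0)$(2,2) + X$(2,2)$(0,0))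
     + v * X$(0,1)$(0,1) + cv * X$(1,0)$(1,0) + su * X$(1,2)$(1,2)"

lemma tY_add: "tY v cv u su (A + B) = tY v cv u su A + tY v cv u su B"
  unfolding tY_def by (simp add: algebra_simps)

lemma tY_sum: "tY v cv u su (\<Sum>k<(m::nat). f k) = (\<Sum>k<m. tY v cv u su (f k))"
proof (induction m)
  case 0 then show ?case by (simp add: tY_def)
next
  case (Suc m) then show ?case by (simp add: tY_add)
qed

lemma tY_tensor:
  assumes "B$0$2 = 0" "B$2$0 = 0" "B$0$0 + c2 * B$1$1 = 0" "s2 * B$1$1 + B$2$2 = 0"
  shows "tY v (c2 * v) u (s2 * u) (tensor B Z) = 0"
proof -
  have a: "B$0$0 = - c2 * B$1$1" "B$2$2 = - s2 * B$1$1" using assms(3,4) by (simp_all add: eq_neg_iff_add_eq_0 add.commute)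
  show ?thesis unfolding tY_def using assms(1,2) by (simp add: a algebra_simps)
qed

lemma tY_ident:
  assumes "v + cv = L" "u + su = L"
  shows "tY v cv u su (tensor (mat 1) \<rho>) = L * ctrace \<rho>"
proof -
  have "tY v cv u su (tensor (mat 1) \<rho>) = (v + cv) * (\<rho>$0$0 + \<rho>$1$1) + (u + su) * \<rho>$2$2"
    by (simp add: tY_def algebra_simps)
  moreover have "L * ctrace \<rho> = L * (\<rho>$0$0 + \<rho>$1$1) + L * \<rho>$2$2"
    by (simp add: ctrace_def sum3 algebra_simps)
  moreover have "L * (\<rho>$0$0 + \<rho>$1$1) + L * \<rho>$2$2 = (v + cv) * (\<rho>$0$0 + \<rho>$1$1) + (u + su) * \<rho>$2$2"
    using assms by simp
  ultimately show ?thesis by simp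
qed

lemma key_identity:
  fixes ic c2 v u s2 :: complex
  assumes "ic * c2 = 1" "v = 1 + ic" "complex_of_real k = c2"
  shows "ic * expect (qv k) X + v * X$(0,1)$(0,1) + (c2 * v) * X$(1,0)$(1,0) + (s2 * u) * X$(1,2)$(1,2)
     + (u - v) * X$(2,2)$(2,2) + expect Phi X = tY v (c2 * v) u (s2 * u) X"
  unfolding expect_qv expect_Phi tY_def using assms
  by (simp add: algebra_simps) algebra

lemma psd_expect: "psd M \<longleftrightarrow> (\<forall>x. 0 \<le> expect x M)"
  unfolding psd_def expect_def by simp

lemma cr_nonneg_mult: "0 \<le> r \<Longrightarrow> 0 \<le> z \<Longrightarrow> 0 \<le> complex_of_real r * (z::complex)"
  by (rule mult_nonneg_nonneg) (simp_all add: less_eq_complex_def)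

lemma angle_facts:
  assumes "0 < a" "a \<le> pi / 4"
  shows "0 < cos a" "0 < sin a" "(sin a)\<^sup>2 \<le> (cos a)\<^sup>2" "(sin a)\<^sup>2 + (cos a)\<^sup>2 = 1"
proof -
  show "0 < cos a" using assms by (intro cos_gt_zero_pi) (use pi_gt_zero in linarith)+
  show "0 < sin a" using assms by (intro sin_gt_zero) (use pi_gt_zero in linarith)+
  have "0 \<le> cos (2 * a)" using assms by (intro cos_ge_zero) (use pi_gt_zero in linarith)+
  then show "(sin a)\<^sup>2 \<le> (cos a)\<^sup>2" by (simp add: cos_double)
  show "(sin a)\<^sup>2 + (cos a)\<^sup>2 = 1" by simp
qed

lemma upper:
  assumes a: "0 < a" "a \<le> pi / 4"
    and X: "X = tensor (mat 1) \<rho> + T" and T: "T \<in> tensor_space (hs_orth (ncgraph {E_op a, D_op a})) UNIV"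
    and tr: "ctrace \<rho> = 1" and psd: "psd X"
  shows "Re (expect Phi X) \<le> 2 + (cos a)\<^sup>2 + 1 / (cos a)\<^sup>2"
proof -
  note af = angle_facts[OF a]
  define c2 where "c2 = (cos a)\<^sup>2"
  define s2 where "s2 = (sin a)\<^sup>2"
  define ic where "ic = 1 / c2"
  define v where "v = 1 + ic"
  define L where "L = 2 + c2 + ic"
  define u where "u = L / (1 + s2)"
  have c2pos: "0 < c2" using af by (simp add: c2_def)
  have s2nn: "0 \<le> s2" by (simp add: s2_def)
  have sc: "s2 \<le> c2" using af by (simp add: s2_def c2_def)
  have icc: "ic * c2 = 1" using c2pos by (simp add: ic_def)
  have Lv: "v + c2 * v = L" unfolding v_def L_def using icc by (simp add: algebra_simps)
  have "u + s2 * u = u * (1 + s2)" by (simp add: algebra_simps)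
  also have "\<dots> = L" unfolding u_def using s2nn by simp
  finally have Lu: "u + s2 * u = L" .
  have icnn: "0 \<le> ic" using c2pos by (simp add: ic_def)
  have vnn: "0 \<le> v" using icnn by (simp add: v_def)
  have Lnn: "0 \<le> L" using icnn c2pos by (simp add: L_def)
  have unn: "0 \<le> u" using Lnn s2nn by (simp add: u_def)
  have uv: "0 \<le> u - v"
  proof -
    have "v = L / (1 + c2)" using Lv c2pos by (simp add: field_simps)
    then have "v \<le> u" unfolding u_def using Lnn sc s2nn by (simp add: frac_le)
    then show ?thesis by simp
  qed
  let ?tY = "tY (complex_of_real v) (complex_of_real c2 * complex_of_real v) (complex_of_real u) (complex_of_real s2 * complex_of_real u)"
  obtain m :: nat and Bs Zs where Tm: "T = (\<Sum>k<m. tensor (Bs k) (Zs k))" and Bs0: "\<forall>k<m. Bs k \<in> hs_orth (ncgraph {E_op a, D_op a}) \<and> Zs k \<in> UNIV"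
    using T unfolding tensor_space_def mem_Collect_eq by blast
  have Bs: "\<forall>k<m. Bs k \<in> hs_orth (ncgraph {E_op a, D_op a})" using Bs0 by blast
  have "?tY T = 0"
    unfolding Tm tY_sum
  proof (intro sum.neutral ballI)
    fix k assume "k \<in> {..<m}"
    then have "Bs k \<in> hs_orth (ncgraph {E_op a, D_op a})" using Bs by simp
    then have o: "Bs k$0$2 = 0 \<and> Bs k$2$0 = 0 \<and> Bs k$0$0 + complex_of_real c2 * Bs k$1$1 = 0
    \<and> complex_of_real s2 * Bs k$1$1 + Bs k$2$2 = 0" using orth_iff[of a] af unfolding c2_def s2_def by simp
    show "?tY (tensor (Bs k) (Zs k)) = 0" using o by (intro tY_tensor) auto
  qed
  moreover have "?tY (tensor (mat 1) \<rho>) = complex_of_real L * ctrace \<rho>"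
    by (rule tY_ident) (simp_all flip: of_real_mult of_real_add add: Lv Lu)
  ultimately have tYX: "?tY X = complex_of_real L" unfolding X tY_add using tr by simp
  define F where "F = complex_of_real ic * expect (qv c2) X + complex_of_real v * X$(0,1)$(0,1)
     + (complex_of_real c2 * complex_of_real v) * X$(1,0)$(1,0) + (complex_of_real s2 * complex_of_real u) * X$(1,2)$(1,2)
     + (complex_of_real u - complex_of_real v) * X$(2,2)$(2,2)"
  have "F + expect Phi X = ?tY X" unfolding F_def
  proof (rule key_identity)
    show "complex_of_real ic * complex_of_real c2 = 1" by (metis icc of_real_1 of_real_mult)
    show "complex_of_real v = 1 + complex_of_real ic" by (simp add: v_def)
  qed simp
  then have eq: "expect Phi X = complex_of_real L - F" using tYX by (simp add: algebra_simps)
  have ps: "0 \<le> expect x X" for x using psd by (simp add: psd_expect)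
  have ent: "0 \<le> X$p$p" for p using ps[of "unitv p"] by (simp add: expect_unit)
  have t1: "0 \<le> complex_of_real ic * expect (qv c2) X" using cr_nonneg_mult[OF icnn ps[of "qv c2"]] .
  have t2: "0 \<le> complex_of_real v * X$(0,1)$(0,1)" using cr_nonneg_mult[OF vnn ent[of "(0,1)"]] .
  have t3: "0 \<le> complex_of_real c2 * complex_of_real v * X$(1,0)$(1,0)"
    using cr_nonneg_mult[of "c2 * v", OF _ ent[of "(1,0)"]] vnn c2pos by simp
  have t4: "0 \<le> complex_of_real s2 * complex_of_real u * X$(1,2)$(1,2)"
    using cr_nonneg_mult[of "s2 * u", OF _ ent[of "(1,2)"]] unn s2nn by simp
  have t5: "0 \<le> (complex_of_real u - complex_of_real v) * X$(2,2)$(2,2)"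
    using cr_nonneg_mult[of "u - v", OF uv ent[of "(2,2)"]] by simp
  have "0 \<le> F" unfolding F_def using t1 t2 t3 t4 t5 by (intro add_nonneg_nonneg)
  then have "0 \<le> Re F" by (simp add: less_eq_complex_def)
  then show ?thesis using eq by (simp add: L_def c2_def ic_def)
qed

lemma cnj_mult_self_nonneg: "0 \<le> cnj z * (z::complex)"
proof -
  have "cnj z * z = complex_of_real ((Re z)\<^sup>2 + (Im z)\<^sup>2)"
    by (subst mult.commute) (rule complex_mult_cnj)
  then show ?thesis by (simp add: less_eq_complex_def)
qed

definition rho0 :: "real \<Rightarrow> complex^3^3" where
  "rho0 c2 = cmat_scale (complex_of_real (c2 / (1 + c2))) (ketbra 0 0) + cmat_scale (complex_of_real (1 / (1 + c2))) (ketbra 1 1)"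
definition Bd :: "real \<Rightarrow> real \<Rightarrow> complex^3^3" where
  "Bd c2 s2 = cmat_scale (complex_of_real (- c2)) (ketbra 0 0) + ketbra 1 1 + cmat_scale (complex_of_real (- s2)) (ketbra 2 2)"
definition W0 :: "real \<Rightarrow> complex^3^3" where
  "W0 c2 = cmat_scale (complex_of_real (- (c2 / (1 + c2)))) (ketbra 0 0) + cmat_scale (complex_of_real (1 / c2 - 1 / (1 + c2))) (ketbra 1 1)"
definition T0 :: "real \<Rightarrow> real \<Rightarrow> complex^(3\<times>3)^(3\<times>3)" where
  "T0 c2 s2 = tensor (Bd c2 s2) (W0 c2) + tensor (ketbra 0 1) (ketbra 0 1) + tensor (ketbra 1 0) (ketbra 1 0)"

definition X1 :: "real \<Rightarrow> real \<Rightarrow> complex^(3\<times>3)^(3\<times>3)" where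
  "X1 c2 s2 = (\<chi> p q. if p = q then (if p = (0,0) then complex_of_real c2 else if p = (1,1) then complex_of_real (1/c2)
     else if p = (2,0) then complex_of_real (c2 / (1 + c2) * (1 + s2))
     else if p = (2,1) then complex_of_real (1 / (1 + c2) - s2 * (1 / c2 - 1 / (1 + c2))) else 0)
     else if (p = (0,0) \<and> q = (1,1)) \<or> (p = (1,1) \<and> q = (0,0)) then 1 else 0)"


lemma X0_nth: "(tensor (mat 1) (rho0 c2) + T0 c2 s2) $ p $ q =
   (if fst p = fst q then rho0 c2 $ snd p $ snd q else 0) + Bd c2 s2 $ fst p $ fst q * W0 c2 $ snd p $ snd q
   + (if p = (0,0) \<and> q = (1,1) then 1 else 0) + (if p = (1,1) \<and> q = (0,0) then 1 else 0)"
  by (cases p; cases q) (auto simp add: T0_def)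

lemma rho0_nth: "rho0 c2 $ i $ j = (if i = j then (if i = 0 then complex_of_real (c2 / (1 + c2)) else if i = 1 then complex_of_real (1 / (1 + c2)) else 0) else 0)"
  by (simp add: rho0_def)
lemma Bd_nth: "Bd c2 s2 $ i $ j = (if i = j then (if i = 0 then complex_of_real (- c2) else if i = 1 then 1 else complex_of_real (- s2)) else 0)"
  using exhaust_3[of i] by (auto simp add: Bd_def)
lemma W0_nth: "W0 c2 $ i $ j = (if i = j then (if i = 0 then complex_of_real (- (c2 / (1 + c2))) else if i = 1 then complex_of_real (1 / c2 - 1 / (1 + c2)) else 0) else 0)"
  by (simp add: W0_def)



lemma X1_nth: "X1 c2 s2 $ p $ q = (if p = q then (if p = (0,0) then complex_of_real c2 else if p = (1,1) then complex_of_real (1/c2)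
     else if p = (2,0) then complex_of_real (c2 / (1 + c2) * (1 + s2))
     else if p = (2,1) then complex_of_real (1 / (1 + c2) - s2 * (1 / c2 - 1 / (1 + c2))) else 0)
     else if (p = (0,0) \<and> q = (1,1)) \<or> (p = (1,1) \<and> q = (0,0)) then 1 else 0)"
  by (simp add: X1_def)

lemma X0_eq:
  assumes "0 < c2"
  shows "tensor (mat 1) (rho0 c2) + T0 c2 s2 = X1 c2 s2"
proof -
  have nz: "1 + c2 \<noteq> 0" "c2 \<noteq> 0" using assms by auto
  have "c2/(1+c2) + (-c2) * (-(c2/(1+c2))) = c2/(1+c2) * (1 + c2)" by (simp add: algebra_simps add_divide_distrib)
  then have e1: "c2/(1+c2) + (-c2) * (-(c2/(1+c2))) = c2" using nz by simp
  have "0 < c2 * c2" using assms by simp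
  then have nz3: "c2 + c2 * c2 \<noteq> 0" using assms by linarith
  have e2: "1/(1+c2) + (-c2) * (1/c2 - 1/(1+c2)) = 0" using nz nz3 by (simp add: field_simps)
  have e3: "c2/(1+c2) + -(c2/(1+c2)) = 0" by simp
  have e4: "1/(1+c2) + (1/c2 - 1/(1+c2)) = 1/c2" by simp
  have e5: "c2/(1+c2) + (-s2) * (-(c2/(1+c2))) = c2/(1+c2) * (1 + s2)" by (simp add: algebra_simps add_divide_distrib)
  have e6: "1/(1+c2) + (-s2) * (1/c2 - 1/(1+c2)) = 1/(1+c2) - s2 * (1/c2 - 1/(1+c2))" by simp
  show ?thesis
  unfolding vec_eq_iff forall33 X0_nth rho0_nth Bd_nth W0_nth X1_nth
  apply (simp del: of_real_minus of_real_divide of_real_diff of_real_add of_real_mult)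
  apply (simp only: of_real_mult[symmetric] of_real_add[symmetric] of_real_eq_iff of_real_eq_0_iff e1 e2 e3 e4 e5 e6)
  apply simp
  done
qed

lemma ring_aux:
  fixes ic cc A B A' B' :: complex
  assumes "ic * cc = 1"
  shows "A' * cc * A + (A' * B + (B' * A + B' * ic * B)) = ic * ((cc * A' + B') * (cc * A + B))"
proof -
  have "ic * ((cc * A' + B') * (cc * A + B)) = (ic * cc) * (A' * cc * A) + (ic * cc) * (A' * B) + (ic * cc) * (B' * A) + B' * ic * B"
    by (simp add: algebra_simps)
  then show ?thesis using assms by simp
qed

lemma psd_X1:
  assumes c: "0 < c2" and d20: "0 \<le> c2 / (1 + c2) * (1 + s2)" and d21: "0 \<le> 1 / (1 + c2) - s2 * (1 / c2 - 1 / (1 + c2))"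
  shows "psd (X1 c2 s2)"
  unfolding psd_expect
proof
  fix x :: "complex^(3\<times>3)"
  define y where "y = complex_of_real c2 * x$(0,0) + x$(1,1)"
  have icc: "complex_of_real (1/c2) * complex_of_real c2 = 1"
  proof -
    have "1/c2 * c2 = 1" using c by simp
    then show ?thesis by (metis of_real_1 of_real_mult)
  qed
  have "expect x (X1 c2 s2) = complex_of_real (1/c2) * (cnj y * y)
     + complex_of_real (c2 / (1 + c2) * (1 + s2)) * (cnj (x$(2,0)) * x$(2,0))
     + complex_of_real (1 / (1 + c2) - s2 * (1 / c2 - 1 / (1 + c2))) * (cnj (x$(2,1)) * x$(2,1))"
    unfolding expect_def sum33 X1_nth y_def
    apply (simp del: of_real_minus of_real_divide of_real_diff of_real_add of_real_mult)
    by (rule ring_aux[OF icc])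
  moreover have "0 \<le> complex_of_real (1/c2) * (cnj y * y)"
    by (rule cr_nonneg_mult) (use c cnj_mult_self_nonneg in auto)
  moreover have "0 \<le> complex_of_real (c2 / (1 + c2) * (1 + s2)) * (cnj (x$(2,0)) * x$(2,0))"
    by (rule cr_nonneg_mult[OF d20 cnj_mult_self_nonneg])
  moreover have "0 \<le> complex_of_real (1 / (1 + c2) - s2 * (1 / c2 - 1 / (1 + c2))) * (cnj (x$(2,1)) * x$(2,1))"
    by (rule cr_nonneg_mult[OF d21 cnj_mult_self_nonneg])
  ultimately show "0 \<le> expect x (X1 c2 s2)" by simp
qed

lemma psd_rho0:
  assumes c: "0 < c2"
  shows "psd (rho0 c2)"
  unfolding psd_expect
proof
  fix x :: "complex^3"
  have "expect x (rho0 c2) = complex_of_real (c2 / (1 + c2)) * (cnj (x$0) * x$0) + complex_of_real (1 / (1 + c2)) * (cnj (x$1) * x$1)"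
    unfolding expect_def sum3 rho0_nth
    by (simp del: of_real_minus of_real_divide of_real_diff of_real_add of_real_mult add: algebra_simps)
  moreover have "0 \<le> complex_of_real (c2 / (1 + c2)) * (cnj (x$0) * x$0)"
    by (rule cr_nonneg_mult) (use c cnj_mult_self_nonneg in auto)
  moreover have "0 \<le> complex_of_real (1 / (1 + c2)) * (cnj (x$1) * x$1)"
    by (rule cr_nonneg_mult) (use c cnj_mult_self_nonneg in auto)
  ultimately show "0 \<le> expect x (rho0 c2)" by simp
qed

lemma trace_rho0:
  assumes c: "0 < c2"
  shows "ctrace (rho0 c2) = 1"
proof -
  have "c2 / (1 + c2) + 1 / (1 + c2) = 1" using c by (simp add: add_divide_distrib[symmetric])
  then have "complex_of_real (c2 / (1 + c2)) + complex_of_real (1 / (1 + c2)) = 1"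
    by (metis of_real_1 of_real_add)
  then show ?thesis unfolding ctrace_def sum3 rho0_nth
    by (simp del: of_real_minus of_real_divide of_real_diff of_real_add of_real_mult)
qed

lemma value_X1:
  "Re (expect Phi (X1 c2 s2)) = 2 + c2 + 1 / c2"
  unfolding expect_Phi X1_nth by simp

lemma T0_mem:
  assumes a: "sin a \<noteq> 0"
  shows "T0 ((cos a)\<^sup>2) ((sin a)\<^sup>2) \<in> tensor_space (hs_orth (ncgraph {E_op a, D_op a})) UNIV"
proof -
  define c2 where "c2 = (cos a)\<^sup>2"
  define s2 where "s2 = (sin a)\<^sup>2"
  define Bs :: "nat \<Rightarrow> complex^3^3" where "Bs k = (if k = 0 then Bd c2 s2 else if k = 1 then ketbra 0 1 else ketbra 1 0)" for k
  define Zs :: "nat \<Rightarrow> complex^3^3" where "Zs k = (if k = 0 then W0 c2 else if k = 1 then ketbra 0 1 else ketbra 1 0)" for k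
  have sum: "T0 c2 s2 = (\<Sum>k<3. tensor (Bs k) (Zs k))"
    by (simp add: numeral_3_eq_3 T0_def Bs_def Zs_def add.assoc)
  have "Bs k \<in> hs_orth (ncgraph {E_op a, D_op a})" for k
    unfolding orth_iff[OF a] Bs_def c2_def[symmetric] s2_def[symmetric]
    by (simp add: Bd_nth)
  then show ?thesis unfolding c2_def[symmetric] s2_def[symmetric] sum tensor_space_def
    by blast
qed

theorem proposition2:
  fixes \<alpha> :: real
  assumes "0 < \<alpha>" and "\<alpha> \<le> pi / 4"
  shows "qlovasz (ncgraph {E_op \<alpha>, D_op \<alpha>}) = 2 + (cos \<alpha>)\<^sup>2 + 1 / (cos \<alpha>)\<^sup>2
    \<and> 2 + (cos \<alpha>)\<^sup>2 + 1 / (cos \<alpha>)\<^sup>2 > 4"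
proof
  note af = angle_facts[OF assms]
  define c2 where "c2 = (cos \<alpha>)\<^sup>2"
  define s2 where "s2 = (sin \<alpha>)\<^sup>2"
  have c2pos: "0 < c2" using af by (simp add: c2_def)
  have s2pos: "0 < s2" using af by (simp add: s2_def)
  have sc: "s2 \<le> c2" using af by (simp add: s2_def c2_def)
  have sum1: "s2 + c2 = 1" using af by (simp add: s2_def c2_def)
  let ?S = "{Re (expect Phi (tensor (mat 1) \<rho> + T)) | \<rho> T.
      T \<in> tensor_space (hs_orth (ncgraph {E_op \<alpha>, D_op \<alpha>})) UNIV \<and> ctrace \<rho> = 1 \<and> psd \<rho> \<and> psd (tensor (mat 1) \<rho> + T)}"
  have d20: "0 \<le> c2 / (1 + c2) * (1 + s2)" using c2pos s2pos by simp
  have d21: "0 \<le> 1 / (1 + c2) - s2 * (1 / c2 - 1 / (1 + c2))"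
  proof -
    have e: "1 / (1 + c2) - s2 * (1 / c2 - 1 / (1 + c2)) = (1 + s2) / (1 + c2) - s2 / c2"
      by (simp add: right_diff_distrib add_divide_distrib)
    have "s2 / c2 \<le> (1 + s2) / (1 + c2)" using c2pos sc by (simp add: divide_simps algebra_simps)
    then show ?thesis unfolding e by simp
  qed
  have mem: "2 + c2 + 1 / c2 \<in> ?S"
  proof -
    have X: "tensor (mat 1) (rho0 c2) + T0 c2 s2 = X1 c2 s2" by (rule X0_eq[OF c2pos])
    have "Re (expect Phi (tensor (mat 1) (rho0 c2) + T0 c2 s2)) = 2 + c2 + 1 / c2"
      unfolding X value_X1 ..
    moreover have "T0 c2 s2 \<in> tensor_space (hs_orth (ncgraph {E_op \<alpha>, D_op \<alpha>})) UNIV"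
      unfolding c2_def s2_def using T0_mem af by simp
    moreover have "psd (tensor (mat 1) (rho0 c2) + T0 c2 s2)" unfolding X by (rule psd_X1[OF c2pos d20 d21])
    ultimately show ?thesis using trace_rho0[OF c2pos] psd_rho0[OF c2pos]
      unfolding mem_Collect_eq
      by (intro exI[where x="rho0 c2"] exI[where x="T0 c2 s2"]) simp
  qed
  have ub: "x \<le> 2 + c2 + 1 / c2" if "x \<in> ?S" for x
    using that upper[OF assms] unfolding c2_def by blast
  show "qlovasz (ncgraph {E_op \<alpha>, D_op \<alpha>}) = 2 + (cos \<alpha>)\<^sup>2 + 1 / (cos \<alpha>)\<^sup>2"
    unfolding qlovasz_def c2_def[symmetric] using mem ub by (intro cSup_eq_maximum) auto
  have "c2 < 1" using sum1 s2pos by linarith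
  then have "0 < (1 - c2) ^ 2" by simp
  then have "2 * c2 < c2 * c2 + 1" by (simp add: power2_eq_square algebra_simps)
  then have "2 < c2 + 1 / c2" using c2pos by (simp add: field_simps)
  then show "2 + (cos \<alpha>)\<^sup>2 + 1 / (cos \<alpha>)\<^sup>2 > 4" unfolding c2_def[symmetric] by simp
qed
end
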